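(* For $n \geq 3$, the collapsibility number of $\mathcal{VR}(\mathbb{I}_n;2)$ is $4$.
   Context: For $n\ge 1$, $\mathbb{I}_n$ is the $n$-dimensional hypercube graph: vertex set $\{0,1\}^n$, two vertices adjacent iff they differ in exactly one coordinate; it is a metric space with the shortest-path (Hamming) distance $d(v,w)=\#\{i: v(i)\ne w(i)\}$. For a metric space $(X,d)$ and $r\ge0$, $\mathcal{VR}(X;r)$ is the simplicial complex on vertex set $X$ whose simplices are the finite subsets of diameter at most $r$. For a finite simplicial complex $\Delta$: if $\gamma\in\Delta$ with $|\gamma|\le d$ is contained in a unique maximal simplex $\sigma$ of $\Delta$, the elementary $d$-collapse removes all simplices $\tau$ with $\gamma\subseteq\tau\subseteq\sigma$. $\Delta$ is $d$-collapsible if a sequence of elementary $d$-collapses reduces $\Delta$ to the void complex $\emptyset$. The collapsibility number of $\Delta$ is the minimal $d$ such that $\Delta$ is $d$-collapsible. *)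

theory Defs
  imports Complex_Main
begin

text \<open>Hypercube graph I_n: vertex set {0,1}^n, encoded as boolean lists of length n,
  with the Hamming (shortest-path) distance.\<close>

definition cube :: "nat \<Rightarrow> bool list set" where
  "cube n = {v. length v = n}"

definition hamming :: "bool list \<Rightarrow> bool list \<Rightarrow> real" where
  "hamming v w = real (card {i. i < length v \<and> v ! i \<noteq> w ! i})"

text \<open>Simplicial complexes are represented by their set of simplices (finite vertex sets).
  The Vietoris-Rips complex: finite subsets of X of diameter at most r.\<close>

definition VR :: "'a set \<Rightarrow> ('a \<Rightarrow> 'a \<Rightarrow> real) \<Rightarrow> real \<Rightarrow> 'a set set" where
  "VR X d r = {\<sigma>. \<sigma> \<subseteq> X \<and> finite \<sigma> \<and> (\<forall>v\<in>\<sigma>. \<forall>w\<in>\<sigma>. d v w \<le> r)}"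

definition maximal_simplex :: "'a set set \<Rightarrow> 'a set \<Rightarrow> bool" where
  "maximal_simplex K \<sigma> \<longleftrightarrow> \<sigma> \<in> K \<and> \<not> (\<exists>\<tau>\<in>K. \<sigma> \<subset> \<tau>)"

definition elem_collapse :: "nat \<Rightarrow> 'a set set \<Rightarrow> 'a set set \<Rightarrow> bool" where
  "elem_collapse d K K' \<longleftrightarrow>
     (\<exists>\<gamma> \<sigma>. \<gamma> \<in> K \<and> card \<gamma> \<le> d \<and> maximal_simplex K \<sigma> \<and> \<gamma> \<subseteq> \<sigma> \<and>
        (\<forall>\<sigma>'. maximal_simplex K \<sigma>' \<and> \<gamma> \<subseteq> \<sigma>' \<longrightarrow> \<sigma>' = \<sigma>) \<and>
        K' = K - {\<tau>. \<gamma> \<subseteq> \<tau> \<and> \<tau> \<subseteq> \<sigma>})"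

text \<open>d-collapsible: a finite sequence of elementary d-collapses reduces K to the void
  complex (no simplices at all).\<close>

definition d_collapsible :: "nat \<Rightarrow> 'a set set \<Rightarrow> bool" where
  "d_collapsible d K \<longleftrightarrow> (elem_collapse d)\<^sup>*\<^sup>* K {}"

definition collapsibility_number :: "'a set set \<Rightarrow> nat" where
  "collapsibility_number K = (LEAST d. d_collapsible d K)"

end

theory Submission
  imports Defs "HOL-Library.List_Lexorder"
begin


definition downclosed :: "'a set set \<Rightarrow> bool" where
  "downclosed L \<longleftrightarrow> (\<forall>\<rho>\<in>L. \<forall>\<tau>. \<tau> \<subseteq> \<rho> \<longrightarrow> \<tau> \<in> L)"

lemma collapse_max:
  assumes "\<sigma> \<in> L" "card \<sigma> \<le> d" "\<not> (\<exists>\<tau>\<in>L. \<sigma> \<subset> \<tau>)"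
  shows "elem_collapse d L (L - {\<sigma>})"
proof -
  have ms: "maximal_simplex L \<sigma>" using assms unfolding maximal_simplex_def by auto
  have u: "\<forall>\<sigma>'. maximal_simplex L \<sigma>' \<and> \<sigma> \<subseteq> \<sigma>' \<longrightarrow> \<sigma>' = \<sigma>"
    using assms unfolding maximal_simplex_def by blast
  have e: "{\<tau>. \<sigma> \<subseteq> \<tau> \<and> \<tau> \<subseteq> \<sigma>} = {\<sigma>}" by auto
  show ?thesis unfolding elem_collapse_def
    apply (rule exI[of _ \<sigma>], rule exI[of _ \<sigma>])
    using assms ms u e by auto
qed

lemma small_collapsible:
  assumes "finite L" "\<forall>\<rho>\<in>L. card \<rho> \<le> d"
  shows "(elem_collapse d)\<^sup>*\<^sup>* L {}"
  using assms
proof (induct "card L" arbitrary: L rule: less_induct)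
  case less
  show ?case
  proof (cases "L = {}")
    case True then show ?thesis by simp
  next
    case False
    obtain \<sigma> where s: "\<sigma> \<in> L" "\<forall>b\<in>L. \<sigma> \<le> b \<longrightarrow> \<sigma> = b"
      using finite_has_maximal[OF less.prems(1) False] by blast
    have nm: "\<not> (\<exists>\<tau>\<in>L. \<sigma> \<subset> \<tau>)" using s by auto
    have c: "elem_collapse d L (L - {\<sigma>})"
      using collapse_max[OF s(1) _ nm] less.prems s(1) by auto
    have "(elem_collapse d)\<^sup>*\<^sup>* (L - {\<sigma>}) {}"
      apply (rule less.hyps)
      using less.prems s(1) by (auto simp: card_gt_0_iff intro!: diff_less)
    then show ?thesis using c by (meson converse_rtranclp_into_rtranclp)
  qed
qed

lemma remove_maxset:
  assumes "finite M" "\<forall>\<sigma>\<in>M. \<sigma> \<in> L \<and> card \<sigma> \<le> d \<and> \<not> (\<exists>\<tau>\<in>L. \<sigma> \<subset> \<tau>)"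
  shows "(elem_collapse d)\<^sup>*\<^sup>* L (L - M)"
  using assms
proof (induct M rule: finite_induct)
  case empty then show ?case by simp
next
  case (insert \<sigma> M)
  have IH: "(elem_collapse d)\<^sup>*\<^sup>* L (L - M)" using insert by auto
  have c: "elem_collapse d (L - M) (L - M - {\<sigma>})"
    apply (rule collapse_max) using insert by auto
  have e: "L - M - {\<sigma>} = L - insert \<sigma> M" by auto
  show ?case using IH c e by (metis rtranclp.rtrancl_into_rtrancl)
qed

definition Vf :: "'a::linorder set set \<Rightarrow> 'a set \<Rightarrow> 'a set" where
  "Vf L T = \<Union>{\<rho>\<in>L. T \<subseteq> \<rho> \<and> (\<forall>x\<in>\<rho> - T. x < Min T)}"

lemma G_step:
  fixes L :: "'a::linorder set set"
  assumes k: "1 \<le> k" "k \<le> d" and fin: "finite L" "\<forall>\<rho>\<in>L. finite \<rho>"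
    and dc: "downclosed L" and inv: "\<forall>T\<in>L. card T = k \<longrightarrow> Vf L T \<in> L"
    and ex: "\<exists>T\<in>L. card T = k"
  shows "\<exists>L'. elem_collapse d L L' \<and> finite L' \<and> (\<forall>\<rho>\<in>L'. finite \<rho>) \<and> downclosed L'
      \<and> (\<forall>T\<in>L'. card T = k \<longrightarrow> Vf L' T \<in> L') \<and> {T\<in>L'. card T = k} \<subset> {T\<in>L. card T = k}"
proof -
  let ?A = "{T\<in>L. card T = k}"
  have fA: "finite ?A" using fin by auto
  have neA: "?A \<noteq> {}" using ex by auto
  have "Max (Min ` ?A) \<in> Min ` ?A" by (rule Max_in) (use fA neA in auto)
  then obtain T0 where T0: "T0 \<in> ?A" "Min T0 = Max (Min ` ?A)" by (metis (no_types, lifting) imageE)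
  have T0max: "\<forall>T\<in>?A. Min T \<le> Min T0" using T0 fA by auto
  have T0L: "T0 \<in> L" and cT0: "card T0 = k" using T0 by auto
  have fT0: "finite T0" using T0L fin by auto
  have neT0: "T0 \<noteq> {}" using cT0 k by auto
  have claim1: "\<forall>\<rho>\<in>L. T0 \<subseteq> \<rho> \<longrightarrow> (\<forall>x\<in>\<rho> - T0. x < Min T0)"
  proof (intro ballI impI, rule ccontr)
    fix \<rho> x assume r: "\<rho> \<in> L" "T0 \<subseteq> \<rho>" "x \<in> \<rho> - T0" "\<not> x < Min T0"
    have mT: "Min T0 \<in> T0" using fT0 neT0 by auto
    have xg: "Min T0 < x" using r mT by (metis DiffD2 linorder_neqE_linordered_idom not_less_iff_gr_or_eq antisym_conv3)
    define T1 where "T1 = insert x (T0 - {Min T0})"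
    have "T1 \<subseteq> \<rho>" using r unfolding T1_def by auto
    then have T1L: "T1 \<in> L" using dc r unfolding downclosed_def by auto
    have "card T1 = k" unfolding T1_def using r fT0 mT cT0 k
      by (simp add: card_insert_if)
    have allg: "\<forall>y\<in>T1. Min T0 < y"
      unfolding T1_def using xg fT0 by (auto simp: less_le)
    have fT1: "finite T1" "T1 \<noteq> {}" unfolding T1_def using fT0 by auto
    have "Min T0 < Min T1" using allg fT1 by auto
    moreover have "Min T1 \<le> Min T0" using T0max T1L \<open>card T1 = k\<close> by auto
    ultimately show False by simp
  qed
  define \<sigma> where "\<sigma> = Vf L T0"
  have sL: "\<sigma> \<in> L" using inv T0L cT0 unfolding \<sigma>_def by auto
  have sub: "\<forall>\<rho>\<in>L. T0 \<subseteq> \<rho> \<longrightarrow> \<rho> \<subseteq> \<sigma>"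
    using claim1 unfolding \<sigma>_def Vf_def by blast
  have T0s: "T0 \<subseteq> \<sigma>" using sub T0L by auto
  have ms: "maximal_simplex L \<sigma>"
    unfolding maximal_simplex_def using sL sub T0s by blast
  have uq: "\<forall>\<sigma>'. maximal_simplex L \<sigma>' \<and> T0 \<subseteq> \<sigma>' \<longrightarrow> \<sigma>' = \<sigma>"
    unfolding maximal_simplex_def using sub sL by blast
  define L' where "L' = L - {\<tau>. T0 \<subseteq> \<tau> \<and> \<tau> \<subseteq> \<sigma>}"
  have L'eq: "L' = {\<rho>\<in>L. \<not> T0 \<subseteq> \<rho>}" unfolding L'_def using sub by auto
  have ec: "elem_collapse d L L'"
    unfolding elem_collapse_def L'_def
  proof (intro exI conjI)
    show "T0 \<in> L" by (fact T0L)
    show "card T0 \<le> d" using cT0 k by simp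
  qed (fact ms T0s uq refl)+
  have key: "\<And>T \<rho>. T \<in> L' \<Longrightarrow> card T = k \<Longrightarrow> \<rho> \<in> L \<Longrightarrow> T \<subseteq> \<rho> \<Longrightarrow>
      (\<forall>x\<in>\<rho> - T. x < Min T) \<Longrightarrow> \<not> T0 \<subseteq> \<rho>"
  proof
    fix T \<rho> assume a: "T \<in> L'" "card T = k" "\<rho> \<in> L" "T \<subseteq> \<rho>" "\<forall>x\<in>\<rho> - T. x < Min T" "T0 \<subseteq> \<rho>"
    have fT: "finite T" using a fin L'eq by auto
    have ne: "T \<noteq> T0" using a L'eq by auto
    obtain y where y: "y \<in> T" "y \<notin> T0"
    proof -
      have "\<not> T \<subseteq> T0"
      proof
        assume "T \<subseteq> T0"
        then have "T = T0" using card_subset_eq[OF fT0] a(2) cT0 by auto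
        then show False using ne by simp
      qed
      then show ?thesis using that by auto
    qed
    obtain z where z: "z \<in> T0" "z \<notin> T"
    proof -
      have "\<not> T0 \<subseteq> T"
      proof
        assume "T0 \<subseteq> T"
        then have "T0 = T" using card_subset_eq[OF fT] a(2) cT0 by auto
        then show False using ne by simp
      qed
      then show ?thesis using that by auto
    qed
    have "z < Min T" using a z by auto
    moreover have "Min T \<le> y" using y fT by auto
    moreover have "y < Min T0" using claim1 a y by auto
    moreover have "Min T0 \<le> z" using z fT0 by auto
    ultimately show False by simp
  qed
  have inv': "\<forall>T\<in>L'. card T = k \<longrightarrow> Vf L' T \<in> L'"
  proof (intro ballI impI)
    fix T assume a: "T \<in> L'" "card T = k"
    have TL: "T \<in> L" using a L'eq by auto
    have eqfam: "{\<rho>\<in>L'. T \<subseteq> \<rho> \<and> (\<forall>x\<in>\<rho> - T. x < Min T)} = {\<rho>\<in>L. T \<subseteq> \<rho> \<and> (\<forall>x\<in>\<rho> - T. x < Min T)}"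
      using key[OF a] L'eq by auto
    have VL: "Vf L T \<in> L" using inv TL a by auto
    have "T \<subseteq> Vf L T" unfolding Vf_def using TL by auto
    moreover have "\<forall>x\<in>Vf L T - T. x < Min T" unfolding Vf_def by auto
    ultimately have "\<not> T0 \<subseteq> Vf L T" using key[OF a VL] by auto
    then show "Vf L' T \<in> L'" using VL eqfam L'eq unfolding Vf_def by simp
  qed
  have dc': "downclosed L'" using dc unfolding downclosed_def L'eq by auto
  have lt: "{T\<in>L'. card T = k} \<subset> {T\<in>L. card T = k}" using L'eq T0L cT0 by auto
  have f1: "finite L'" "\<forall>\<rho>\<in>L'. finite \<rho>" using fin L'eq by auto
  show ?thesis using ec inv' dc' lt f1 by blast
qed

lemma G_all:
  fixes L :: "'a::linorder set set"
  assumes k: "1 \<le> k" "k \<le> d" and fin: "finite L" "\<forall>\<rho>\<in>L. finite \<rho>"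
    and dc: "downclosed L" and inv: "\<forall>T\<in>L. card T = k \<longrightarrow> Vf L T \<in> L"
  shows "(elem_collapse d)\<^sup>*\<^sup>* L {}"
  using fin dc inv
proof (induct "card {T\<in>L. card T = k}" arbitrary: L rule: less_induct)
  case less
  show ?case
  proof (cases "\<exists>T\<in>L. card T = k")
    case True
    obtain L' where L': "elem_collapse d L L'" "finite L'" "\<forall>\<rho>\<in>L'. finite \<rho>" "downclosed L'"
      "\<forall>T\<in>L'. card T = k \<longrightarrow> Vf L' T \<in> L'" "{T\<in>L'. card T = k} \<subset> {T\<in>L. card T = k}"
      using G_step[OF k less.prems(1,2,3,4) True] by blast
    have "card {T\<in>L'. card T = k} < card {T\<in>L. card T = k}"
      using L'(6) less.prems(1) by (simp add: psubset_card_mono)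
    then have "(elem_collapse d)\<^sup>*\<^sup>* L' {}" using less.hyps L' by blast
    then show ?thesis using L'(1) by (meson converse_rtranclp_into_rtranclp)
  next
    case False
    have "\<forall>\<rho>\<in>L. card \<rho> \<le> d"
    proof
      fix \<rho> assume r: "\<rho> \<in> L"
      show "card \<rho> \<le> d"
      proof (rule ccontr)
        assume "\<not> card \<rho> \<le> d"
        then have "k \<le> card \<rho>" using k by simp
        then obtain T where "T \<subseteq> \<rho>" "card T = k" using obtain_subset_with_card_n by metis
        then show False using False less.prems(3) r unfolding downclosed_def by auto
      qed
    qed
    then show ?thesis using small_collapsible less.prems by auto
  qed
qed



definition sdf :: "'a set \<Rightarrow> 'a set \<Rightarrow> 'a set" where
  "sdf A B = (A - B) \<union> (B - A)"

lemma card_le2_cases: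
  assumes "finite A" "card A \<le> 2"
  shows "A = {} \<or> (\<exists>p. A = {p}) \<or> (\<exists>p q. p \<noteq> q \<and> A = {p,q})"
proof -
  have "card A = 0 \<or> card A = 1 \<or> card A = 2" using assms(2) by linarith
  then show ?thesis
  proof (elim disjE)
    assume "card A = 0" then show ?thesis using assms(1) by simp
  next
    assume "card A = 1"
    then obtain p where "A = {p}" by (auto simp: card_1_singleton_iff)
    then have "\<exists>p. A = {p}" by (rule exI)
    then show ?thesis by (intro disjI2 disjI1)
  next
    assume "card A = 2"
    then obtain p q where pq: "A = {p,q}" "p \<noteq> q" unfolding card_2_iff by blast
    then have "\<exists>p q. p \<noteq> q \<and> A = {p,q}" by blast
    then show ?thesis by (intro disjI2)
  qed
qed

lemma t1: "k \<notin> {i,j} \<Longrightarrow> i \<noteq> j \<Longrightarrow> card (sdf {i} {j,k}) = 3"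
  by (auto simp: sdf_def insert_Diff_if card_insert_if)

lemma t2: "k \<notin> {i,j} \<Longrightarrow> l \<notin> {i,j} \<Longrightarrow> l \<noteq> k \<Longrightarrow> i \<noteq> j \<Longrightarrow> card (sdf {i,l} {j,k}) = 4"
  by (auto simp: sdf_def insert_Diff_if card_insert_if)


definition GR :: "nat \<Rightarrow> nat \<Rightarrow> nat set \<Rightarrow> bool" where
  "GR i j B \<longleftrightarrow> B = {} \<or> B = {i} \<or> B = {j} \<or> B = {i,j} \<or> (\<exists>k. k \<notin> {i,j} \<and> (B = {i,k} \<or> B = {j,k}))"

lemma GR_intros:
  "B = {} \<Longrightarrow> GR i j B" "B = {i} \<Longrightarrow> GR i j B" "B = {j} \<Longrightarrow> GR i j B" "B = {i,j} \<Longrightarrow> GR i j B"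
  "k \<notin> {i,j} \<Longrightarrow> B = {i,k} \<Longrightarrow> GR i j B" "k \<notin> {i,j} \<Longrightarrow> B = {j,k} \<Longrightarrow> GR i j B"
  unfolding GR_def
       apply (rule disjI1, assumption)
      apply (rule disjI2, rule disjI1, assumption)
     apply (rule disjI2, rule disjI2, rule disjI1, assumption)
    apply (rule disjI2, rule disjI2, rule disjI2, rule disjI1, assumption)
   apply ((rule disjI2)+, rule exI, rule conjI, assumption, rule disjI1, assumption)
  apply ((rule disjI2)+, rule exI, rule conjI, assumption, rule disjI2, assumption)
  done

lemma R_lemma:
  assumes ij: "i \<noteq> j" and fB: "finite B" and cB: "card B \<le> 2" and sB: "card (sdf B {i,j}) \<le> 2"
  shows "GR i j B"
proof -
  have "B = {} \<or> (\<exists>p. B = {p}) \<or> (\<exists>p q. p \<noteq> q \<and> B = {p,q})" by (rule card_le2_cases[OF fB cB])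
  then show ?thesis
  proof (elim disjE exE conjE)
    assume "B = {}" then show ?thesis by (rule GR_intros)
  next
    fix p assume b: "B = {p}"
    show ?thesis
    proof (cases "p = i")
      case True show ?thesis by (rule GR_intros(2)) (simp add: b True)
    next
      case pi: False
      show ?thesis
      proof (cases "p = j")
        case True show ?thesis by (rule GR_intros(3)) (simp add: b True)
      next
        case False
        have "j \<notin> {p,i}" using False ij by simp
        then have "card (sdf {p} {i,j}) = 3" by (rule t1[OF _ pi])
        moreover have "card (sdf {p} {i,j}) \<le> 2" using sB unfolding b .
        ultimately have False by linarith
        then show ?thesis by (rule FalseE)
      qed
    qed
  next
    fix p q assume pq: "p \<noteq> q" and b: "B = {p,q}"
    have e1: "{p,q} = {q,p}" by (rule insert_commute)
    show ?thesis
    proof (cases "p \<in> {i,j} \<or> q \<in> {i,j}")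
      case False
      have h: "j \<notin> {p,i}" "q \<notin> {p,i}" "q \<noteq> j" "p \<noteq> i" using False ij pq by simp_all
      have "card (sdf {p,q} {i,j}) = 4" by (rule t2[OF h])
      moreover have "card (sdf {p,q} {i,j}) \<le> 2" using sB unfolding b .
      ultimately have False by linarith
      then show ?thesis by (rule FalseE)
    next
      case True
      then have "(p = i \<or> p = j) \<or> (q = i \<or> q = j)" by simp
      then show ?thesis
      proof (elim disjE)
        assume pi: "p = i"
        show ?thesis
        proof (cases "q = j")
          case True show ?thesis by (rule GR_intros(4)) (simp add: b pi True)
        next
          case False then have "q \<notin> {i,j}" using pq pi by auto
          then show ?thesis by (rule GR_intros(5)) (simp add: b pi)
        qed
      next
        assume pj: "p = j"
        show ?thesis
        proof (cases "q = i")
          case True then have "B = {i,j}" using b pj e1 by simp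
          then show ?thesis by (rule GR_intros)
        next
          case False then have "q \<notin> {i,j}" using pq pj by auto
          then show ?thesis by (rule GR_intros(6)) (simp add: b pj)
        qed
      next
        assume qi: "q = i"
        show ?thesis
        proof (cases "p = j")
          case True then have "B = {i,j}" using b qi e1 by simp
          then show ?thesis by (rule GR_intros)
        next
          case False then have pn: "p \<notin> {i,j}" using pq qi by auto
          have "B = {i,p}" using b qi e1 by simp
          then show ?thesis by (rule GR_intros(5)[OF pn])
        qed
      next
        assume qj: "q = j"
        show ?thesis
        proof (cases "p = i")
          case True show ?thesis by (rule GR_intros(4)) (simp add: b qj True)
        next
          case False then have pn: "p \<notin> {i,j}" using pq qj by auto
          have "B = {j,p}" using b qj e1 by simp
          then show ?thesis by (rule GR_intros(6)[OF pn])
        qed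
      qed
    qed
  qed
qed

lemma card_le4: "card {a,b,c,d} \<le> 4"
  by (simp add: card_insert_if)

lemma card_le4': "card {a,b,c,d} \<le> (4::nat)"
  by (rule card_le4)

lemma c_small:
  "card (sdf {} {i}) = 1" "card (sdf {i} {i}) = 0"
  "i \<noteq> j \<Longrightarrow> card (sdf {i,j} {i}) = 1" "l \<noteq> i \<Longrightarrow> card (sdf {i,l} {i}) = 1"
  by (auto simp: sdf_def insert_Diff_if)

lemma SLcase:
  assumes ij: "i \<noteq> j" and A0: "A0 = {i,j}"
    and R: "\<forall>B\<in>F. B = {} \<or> B = {i} \<or> B = {j} \<or> B = A0 \<or> (\<exists>k. k \<notin> A0 \<and> (B = {i,k} \<or> B = {j,k}))"
    and k: "k \<notin> A0" "{i,k} \<in> F"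
    and no: "\<not> (\<exists>k. k \<notin> A0 \<and> {i,k} \<in> F \<and> {j,k} \<in> F)"
    and sd: "\<forall>A\<in>F. \<forall>B\<in>F. card (sdf A B) \<le> 2"
  shows "\<forall>B\<in>F. card (sdf B {i}) \<le> 1"
proof
  fix B assume B: "B \<in> F"
  have s1: "card (sdf B {i,k}) \<le> 2" using sd B k by blast
  have k2: "k \<notin> {j,i}" using k A0 by auto
  from R B have "B = {} \<or> B = {i} \<or> B = {j} \<or> B = A0 \<or> (\<exists>l. l \<notin> A0 \<and> (B = {i,l} \<or> B = {j,l}))"
    by (rule bspec)
  then show "card (sdf B {i}) \<le> 1"
  proof (elim disjE exE conjE)
    assume b: "B = {}" have "card (sdf {} {i}) = 1" by (rule c_small(1))
    then show ?thesis unfolding b by linarith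
  next
    assume b: "B = {i}" have "card (sdf {i} {i}) = 0" by (rule c_small(2))
    then show ?thesis unfolding b by linarith
  next
    assume b: "B = {j}"
    have "card (sdf {j} {i,k}) \<le> 2" using s1 unfolding b .
    then have False using t1[OF k2 ij[symmetric]] by linarith
    then show ?thesis by (rule FalseE)
  next
    assume b: "B = A0" have "card (sdf {i,j} {i}) = 1" by (rule c_small(3)[OF ij])
    then show ?thesis unfolding b A0 by linarith
  next
    fix l assume l: "l \<notin> A0" "B = {i,l}"
    then have "l \<noteq> i" using A0 by auto
    then have "card (sdf {i,l} {i}) = 1" by (rule c_small(4))
    then show ?thesis unfolding l(2) by linarith
  next
    fix l assume l: "l \<notin> A0" "B = {j,l}"
    show ?thesis
    proof (cases "l = k")
      case True
      have "{j,k} \<in> F" using B unfolding l(2) True .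
      then have False using no k by blast
      then show ?thesis by (rule FalseE)
    next
      case False
      have l2: "l \<notin> {j,i}" using l A0 by auto
      have "card (sdf {j,l} {i,k}) \<le> 2" using s1 unfolding l(2) .
      then have False using t2[OF k2 l2 False ij[symmetric]] by linarith
      then show ?thesis by (rule FalseE)
    qed
  qed
qed

lemma SL:
  fixes F :: "nat set set"
  assumes fin: "\<forall>A\<in>F. finite A" and c2: "\<forall>A\<in>F. card A \<le> 2"
    and sd: "\<forall>A\<in>F. \<forall>B\<in>F. card (sdf A B) \<le> 2" and big: "5 \<le> card F"
  shows "\<exists>C. card C \<le> 1 \<and> finite C \<and> C \<subseteq> \<Union>F \<and> (\<forall>A\<in>F. card (sdf A C) \<le> 1)"
proof (cases "\<forall>A\<in>F. card A \<le> 1")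
  case True
  have e: "\<And>A. sdf A {} = A" by (simp add: sdf_def)
  show ?thesis
  proof (intro exI[of _ "{}"] conjI)
    show "\<forall>A\<in>F. card (sdf A {}) \<le> 1" unfolding e by (rule True)
  qed simp_all
next
  case False
  then obtain A0 where A0a: "A0 \<in> F" "\<not> card A0 \<le> 1" by blast
  have A0: "A0 \<in> F" "card A0 = 2" using A0a c2 by (simp, force)
  then obtain i j where ij: "i \<noteq> j" "A0 = {i,j}" by (auto simp: card_2_iff)
  have R: "\<forall>B\<in>F. B = {} \<or> B = {i} \<or> B = {j} \<or> B = {i,j} \<or> (\<exists>k. k \<notin> {i,j} \<and> (B = {i,k} \<or> B = {j,k}))"
  proof
    fix B assume B: "B \<in> F"
    have sB: "card (sdf B {i,j}) \<le> 2" using sd B A0(1) unfolding ij(2) by blast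
    have fB: "finite B" using fin B by blast
    have cB: "card B \<le> 2" using c2 B by blast
    show "B = {} \<or> B = {i} \<or> B = {j} \<or> B = {i,j} \<or> (\<exists>k. k \<notin> {i,j} \<and> (B = {i,k} \<or> B = {j,k}))"
      using R_lemma[OF ij(1) fB cB sB] unfolding GR_def .
  qed
  have RA: "\<forall>B\<in>F. B = {} \<or> B = {i} \<or> B = {j} \<or> B = A0 \<or> (\<exists>k. k \<notin> A0 \<and> (B = {i,k} \<or> B = {j,k}))"
    unfolding ij(2) by (rule R)
  have RA': "\<forall>B\<in>F. B = {} \<or> B = {j} \<or> B = {i} \<or> B = A0 \<or> (\<exists>k. k \<notin> A0 \<and> (B = {j,k} \<or> B = {i,k}))"
    using RA by (simp only: disj_ac)
  have A0': "A0 = {j,i}" using ij(2) by (simp add: insert_commute)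
  have small: "\<And>S. finite S \<Longrightarrow> F \<subseteq> S \<Longrightarrow> card S \<le> 4 \<Longrightarrow> False"
  proof -
    fix S assume "finite S" "F \<subseteq> S" "card S \<le> 4"
    then have "card F \<le> 4" using card_mono le_trans by blast
    then show False using big by simp
  qed
  have iF: "i \<in> \<Union>F" "j \<in> \<Union>F" using A0 ij by auto
  show ?thesis
  proof (cases "\<exists>k. k \<notin> {i,j} \<and> {i,k} \<in> F \<and> {j,k} \<in> F")
    case True
    then obtain k where k: "k \<notin> {i,j}" "{i,k} \<in> F" "{j,k} \<in> F" by blast
    have "F \<subseteq> {{}, {i,j}, {i,k}, {j,k}}"
    proof
      fix B assume B: "B \<in> F"
      have s1: "card (sdf B {i,k}) \<le> 2" "card (sdf B {j,k}) \<le> 2" using sd B k by auto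
      have kji: "k \<notin> {j,i}" using k(1) by auto
      have jni: "j \<noteq> i" using ij(1) by simp
      from R B have "B = {} \<or> B = {i} \<or> B = {j} \<or> B = {i,j} \<or> (\<exists>l. l \<notin> {i,j} \<and> (B = {i,l} \<or> B = {j,l}))"
        by (rule bspec)
      then show "B \<in> {{}, {i,j}, {i,k}, {j,k}}"
      proof (elim disjE exE conjE)
        assume "B = {}" then show ?thesis by (simp only: insert_iff) blast
      next
        assume b: "B = {i}"
        have "card (sdf {i} {j,k}) \<le> 2" using s1(2) b by simp
        then have False using t1[OF k(1) ij(1)] by linarith
        then show ?thesis by (rule FalseE)
      next
        assume b: "B = {j}"
        have "card (sdf {j} {i,k}) \<le> 2" using s1(1) b by simp
        then have False using t1[OF kji jni] by linarith
        then show ?thesis by (rule FalseE)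
      next
        assume "B = {i,j}" then show ?thesis by (simp only: insert_iff) blast
      next
        fix l assume l: "l \<notin> {i,j}" "B = {i,l}"
        show ?thesis
        proof (cases "l = k")
          case True then have "B = {i,k}" using l by simp
          then show ?thesis by (simp only: insert_iff) blast
        next
          case False
          have "card (sdf {i,l} {j,k}) \<le> 2" using s1(2) l(2) by simp
          then have False using t2[OF k(1) l(1) False ij(1)] by linarith
          then show ?thesis by (rule FalseE)
        qed
      next
        fix l assume l: "l \<notin> {i,j}" "B = {j,l}"
        show ?thesis
        proof (cases "l = k")
          case True then have "B = {j,k}" using l by simp
          then show ?thesis by (simp only: insert_iff) blast
        next
          case False
          have lji: "l \<notin> {j,i}" using l(1) by auto
          have "card (sdf {j,l} {i,k}) \<le> 2" using s1(1) l(2) by simp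
          then have False using t2[OF kji lji False jni] by linarith
          then show ?thesis by (rule FalseE)
        qed
      qed
    qed
    then have False using small[OF _ _ card_le4] by (meson finite.emptyI finite.insertI)
    then show ?thesis by (rule FalseE)
  next
    case False
    show ?thesis
    proof (cases "\<exists>k. k \<notin> {i,j} \<and> {i,k} \<in> F")
      case True
      then obtain k where k: "k \<notin> {i,j}" "{i,k} \<in> F" by blast
      have k': "k \<notin> A0" using k ij(2) by simp
      have no: "\<not> (\<exists>k. k \<notin> A0 \<and> {i,k} \<in> F \<and> {j,k} \<in> F)" using False ij(2) by simp
      have "\<forall>B\<in>F. card (sdf B {i}) \<le> 1" by (rule SLcase[OF ij RA k' k(2) no sd])
      then show ?thesis using iF by (intro exI[of _ "{i}"]) auto
    next
      case F2: False
      show ?thesis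
      proof (cases "\<exists>k. k \<notin> {i,j} \<and> {j,k} \<in> F")
        case True
        then obtain k where k: "k \<notin> A0" "{j,k} \<in> F" using ij(2) by auto
        have no: "\<not> (\<exists>k. k \<notin> A0 \<and> {j,k} \<in> F \<and> {i,k} \<in> F)" using False ij(2) by auto
        have "\<forall>B\<in>F. card (sdf B {j}) \<le> 1" by (rule SLcase[OF ij(1)[symmetric] A0' RA' k no sd])
        then show ?thesis using iF by (intro exI[of _ "{j}"]) auto
      next
        case F3: False
        have "F \<subseteq> {{}, {i}, {j}, {i,j}}"
        proof
          fix B assume B: "B \<in> F"
          from R B have "B = {} \<or> B = {i} \<or> B = {j} \<or> B = {i,j} \<or> (\<exists>l. l \<notin> {i,j} \<and> (B = {i,l} \<or> B = {j,l}))"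
            by (rule bspec)
          then show "B \<in> {{}, {i}, {j}, {i,j}}"
          proof (elim disjE exE conjE)
            assume "B = {}" then show ?thesis by (simp only: insert_iff) blast
          next
            assume "B = {i}" then show ?thesis by (simp only: insert_iff) blast
          next
            assume "B = {j}" then show ?thesis by (simp only: insert_iff) blast
          next
            assume "B = {i,j}" then show ?thesis by (simp only: insert_iff) blast
          next
            fix l assume "l \<notin> {i,j}" "B = {i,l}" then show ?thesis using F2 B by auto
          next
            fix l assume "l \<notin> {i,j}" "B = {j,l}" then show ?thesis using F3 B by auto
          qed
        qed
        then have False using small[OF _ _ card_le4] by (meson finite.emptyI finite.insertI)
        then show ?thesis by (rule FalseE)
      qed
    qed
  qed
qed



definition ds :: "bool list \<Rightarrow> bool list \<Rightarrow> nat set" where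
  "ds v w = {i. i < length v \<and> v ! i \<noteq> w ! i}"

lemma hamming_ds: "hamming v w = real (card (ds v w))"
  unfolding hamming_def ds_def by simp

lemma finite_ds[simp]: "finite (ds v w)"
  unfolding ds_def by simp

lemma ds_sub: "ds v w \<subseteq> {..<length v}"
  unfolding ds_def by auto

lemma ds_sym: "length v = length w \<Longrightarrow> ds v w = ds w v"
  unfolding ds_def by auto

lemma hamming_sym: "length v = length w \<Longrightarrow> hamming v w = hamming w v"
  unfolding hamming_ds using ds_sym by simp

lemma ds_tri: "length a = length x \<Longrightarrow> length a = length y \<Longrightarrow> ds x y = sdf (ds a x) (ds a y)"
  unfolding ds_def sdf_def by auto

lemma ds_empty: "length v = length w \<Longrightarrow> ds v w = {} \<Longrightarrow> v = w"
  unfolding ds_def by (auto intro: nth_equalityI)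

lemma ds_inj: "length a = length x \<Longrightarrow> length a = length y \<Longrightarrow> ds a x = ds a y \<Longrightarrow> x = y"
proof -
  assume a: "length a = length x" "length a = length y" "ds a x = ds a y"
  have "ds x y = sdf (ds a x) (ds a y)" by (rule ds_tri[OF a(1) a(2)])
  also have "\<dots> = {}" using a(3) unfolding sdf_def by simp
  finally show "x = y" using ds_empty a by simp
qed

lemma ds_triangle: "length v = length c \<Longrightarrow> length c = length w \<Longrightarrow>
    card (ds v w) \<le> card (ds v c) + card (ds c w)"
proof -
  assume l: "length v = length c" "length c = length w"
  have "ds v w \<subseteq> ds v c \<union> ds c w" unfolding ds_def using l by auto
  then have "card (ds v w) \<le> card (ds v c \<union> ds c w)" by (simp add: card_mono)
  also have "\<dots> \<le> card (ds v c) + card (ds c w)" by (rule card_Un_le)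
  finally show ?thesis .
qed

definition flipC :: "bool list \<Rightarrow> nat set \<Rightarrow> bool list" where
  "flipC a C = map (\<lambda>i. if i \<in> C then \<not> a ! i else a ! i) [0..<length a]"

lemma flipC_len[simp]: "length (flipC a C) = length a"
  unfolding flipC_def by simp

lemma ds_flipC: "C \<subseteq> {..<length a} \<Longrightarrow> ds a (flipC a C) = C"
  unfolding ds_def flipC_def by auto

lemma finite_cube: "finite (cube n)"
  unfolding cube_def using finite_lists_length_eq[of "UNIV :: bool set" n] by simp

definition ball1 :: "nat \<Rightarrow> bool list \<Rightarrow> bool list set" where
  "ball1 n c = {w \<in> cube n. hamming c w \<le> 1}"

lemma VR_mem: "X \<in> VR (cube n) hamming 2 \<longleftrightarrow>
    X \<subseteq> cube n \<and> finite X \<and> (\<forall>v\<in>X. \<forall>w\<in>X. card (ds v w) \<le> 2)"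
  unfolding VR_def hamming_ds by auto

lemma ball1_VR: "c \<in> cube n \<Longrightarrow> ball1 n c \<in> VR (cube n) hamming 2"
proof -
  assume c: "c \<in> cube n"
  have "\<forall>v\<in>ball1 n c. \<forall>w\<in>ball1 n c. card (ds v w) \<le> 2"
  proof (intro ballI)
    fix v w assume vw: "v \<in> ball1 n c" "w \<in> ball1 n c"
    have l: "length v = n" "length w = n" "length c = n" using vw c unfolding ball1_def cube_def by auto
    have "card (ds c v) \<le> 1" "card (ds c w) \<le> 1" using vw unfolding ball1_def hamming_ds by auto
    moreover have "ds v c = ds c v" using ds_sym l by simp
    ultimately show "card (ds v w) \<le> 2" using ds_triangle[of v c w] l by simp
  qed
  moreover have "ball1 n c \<subseteq> cube n" unfolding ball1_def by auto
  moreover have "finite (ball1 n c)" using finite_cube unfolding ball1_def by simp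
  ultimately show ?thesis unfolding VR_mem by blast
qed

lemma ballA:
  assumes X: "X \<in> VR (cube n) hamming 2" and big: "5 \<le> card X"
  shows "\<exists>c\<in>cube n. X \<subseteq> ball1 n c"
proof -
  have Xc: "X \<subseteq> cube n" "finite X" and dX: "\<forall>v\<in>X. \<forall>w\<in>X. card (ds v w) \<le> 2"
    using X unfolding VR_mem by auto
  have "X \<noteq> {}" using big by auto
  then obtain a where a: "a \<in> X" by blast
  have la: "length a = n" using a Xc unfolding cube_def by auto
  have lX: "\<And>x. x \<in> X \<Longrightarrow> length x = n" using Xc unfolding cube_def by auto
  define F where "F = ds a ` X"
  have inj: "inj_on (ds a) X"
    unfolding inj_on_def using ds_inj la lX by metis
  have cF: "card F = card X" unfolding F_def using card_image[OF inj] .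
  have F1: "\<forall>A\<in>F. finite A" unfolding F_def by auto
  have F2: "\<forall>A\<in>F. card A \<le> 2" unfolding F_def using dX a by auto
  have F3: "\<forall>A\<in>F. \<forall>B\<in>F. card (sdf A B) \<le> 2"
  proof (intro ballI)
    fix A B assume "A \<in> F" "B \<in> F"
    then obtain x y where xy: "x \<in> X" "y \<in> X" "A = ds a x" "B = ds a y" unfolding F_def by auto
    have "ds x y = sdf A B" using ds_tri[of a x y] xy la lX by simp
    then show "card (sdf A B) \<le> 2" using dX xy by metis
  qed
  obtain C where C: "card C \<le> 1" "finite C" "C \<subseteq> \<Union>F" "\<forall>A\<in>F. card (sdf A C) \<le> 1"
    using SL[OF F1 F2 F3] cF big by auto
  have Csub: "C \<subseteq> {..<length a}" using C(3) ds_sub unfolding F_def by blast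
  define c where "c = flipC a C"
  have cc: "c \<in> cube n" unfolding c_def cube_def using la by simp
  have dac: "ds a c = C" unfolding c_def using ds_flipC[OF Csub] .
  have "X \<subseteq> ball1 n c"
  proof
    fix w assume w: "w \<in> X"
    have "ds c w = sdf (ds a c) (ds a w)" using ds_tri[of a c w] la lX[OF w] unfolding c_def by simp
    also have "\<dots> = sdf C (ds a w)" using dac by simp
    also have "\<dots> = sdf (ds a w) C" unfolding sdf_def by auto
    finally have "card (ds c w) \<le> 1" using C(4) w unfolding F_def by auto
    then show "w \<in> ball1 n c" unfolding ball1_def hamming_ds using w Xc by auto
  qed
  then show ?thesis using cc by blast
qed

lemma SL2:
  assumes fE: "finite E" and nE: "E \<noteq> {}"
    and G: "\<forall>S\<in>G. finite S \<and> card S \<le> 1 \<and> card (sdf S E) \<le> 1"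
  shows "card G \<le> 2"
proof (cases "G = {}")
  case True then show ?thesis by simp
next
  case False
  have sub: "\<forall>S\<in>G. S \<subseteq> E"
  proof (intro ballI subsetI)
    fix S x assume S: "S \<in> G" and x: "x \<in> S"
    show "x \<in> E"
    proof (rule ccontr)
      assume xE: "x \<notin> E"
      have fS: "finite S" "card S \<le> 1" using G S by auto
      have h: "\<forall>a1\<in>S. \<forall>a2\<in>S. a1 = a2" using fS(2) card_le_Suc0_iff_eq[OF fS(1)] by simp
      have s1: "S \<subseteq> {x}"
      proof
        fix y assume "y \<in> S" then have "y = x" by (rule h[rule_format, OF _ x])
        then show "y \<in> {x}" by simp
      qed
      have s2: "{x} \<subseteq> S" using x by simp
      have Sx: "S = {x}" using s1 s2 by (rule equalityI)
      have "sdf S E = insert x E" unfolding Sx sdf_def using xE by auto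
      then have "card (sdf S E) = Suc (card E)" using xE fE by simp
      moreover have "card E \<ge> 1" using fE nE by (simp add: Suc_le_eq card_gt_0_iff)
      ultimately show False using G S by auto
    qed
  qed
  have low: "\<forall>S\<in>G. card E \<le> card S + 1"
  proof
    fix S assume S: "S \<in> G"
    have "E \<subseteq> S \<union> (E - S)" by auto
    then have "card E \<le> card (S \<union> (E - S))" using fE G S by (intro card_mono) auto
    also have "\<dots> \<le> card S + card (E - S)" by (rule card_Un_le)
    also have "card (E - S) \<le> card (sdf S E)" unfolding sdf_def using fE G S by (intro card_mono) auto
    finally show "card E \<le> card S + 1" using G S by auto
  qed
  obtain S0 where S0: "S0 \<in> G" using False by auto
  have cE: "card E \<le> 2" using low S0 G by fastforce
  have cE1: "card E \<ge> 1" using fE nE by (simp add: Suc_le_eq card_gt_0_iff)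
  show ?thesis
  proof (cases "card E = 1")
    case True
    have "G \<subseteq> Pow E" using sub by auto
    then have "card G \<le> card (Pow E)" using fE by (intro card_mono) auto
    also have "\<dots> = 2" using True fE by (simp add: card_Pow)
    finally show ?thesis .
  next
    case False
    then have E2: "card E = 2" using cE cE1 by linarith
    have "G \<subseteq> (\<lambda>x. {x}) ` E"
    proof
      fix S assume S: "S \<in> G"
      have c1: "card S = 1" using low S G E2 by fastforce
      then obtain x where Sx: "S = {x}" by (auto simp: card_1_singleton_iff)
      then have "x \<in> E" using sub S by auto
      then show "S \<in> (\<lambda>x. {x}) ` E" using Sx by auto
    qed
    then have "card G \<le> card ((\<lambda>x. {x}) ` E)" using fE by (intro card_mono) auto
    also have "\<dots> \<le> card E" using fE by (rule card_image_le)
    finally show ?thesis using E2 by simp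
  qed
qed

lemma centers_eq:
  assumes c: "c \<in> cube n" "c' \<in> cube n" and t: "\<tau> \<subseteq> ball1 n c" "\<tau> \<subseteq> ball1 n c'"
    and big: "3 \<le> card \<tau>"
  shows "c = c'"
proof (rule ccontr)
  assume ne: "c \<noteq> c'"
  have lc: "length c = n" "length c' = n" using c unfolding cube_def by auto
  have lt: "\<And>w. w \<in> \<tau> \<Longrightarrow> length w = n" using t unfolding ball1_def cube_def by auto
  define E where "E = ds c c'"
  have nE: "E \<noteq> {}" unfolding E_def using ds_empty lc ne by auto
  define G where "G = ds c ` \<tau>"
  have inj: "inj_on (ds c) \<tau>" unfolding inj_on_def using ds_inj lc lt by metis
  have cG: "card G = card \<tau>" unfolding G_def using card_image[OF inj] .
  have "\<forall>S\<in>G. finite S \<and> card S \<le> 1 \<and> card (sdf S E) \<le> 1"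
  proof
    fix S assume "S \<in> G"
    then obtain w where w: "w \<in> \<tau>" "S = ds c w" unfolding G_def by auto
    have h1: "card (ds c w) \<le> 1" "card (ds c' w) \<le> 1" using t w unfolding ball1_def hamming_ds by auto
    have "ds c' w = sdf (ds c c') (ds c w)" by (rule ds_tri) (use lc lt w in simp_all)
    also have "\<dots> = sdf S E" unfolding E_def w(2) sdf_def by auto
    finally show "finite S \<and> card S \<le> 1 \<and> card (sdf S E) \<le> 1" using h1 w by simp
  qed
  then have "card G \<le> 2" using SL2[OF _ nE] unfolding E_def by simp
  then show False using cG big by simp
qed

lemma K_finite: "finite (VR (cube n) hamming 2)"
proof -
  have "VR (cube n) hamming 2 \<subseteq> Pow (cube n)" unfolding VR_def by auto
  then show ?thesis using finite_cube[of n] by (simp add: finite_subset)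
qed

lemma K_dc: "downclosed (VR (cube n) hamming 2)"
  unfolding downclosed_def VR_def by (auto intro: finite_subset)

lemma Vf_sub: "(\<forall>\<rho>\<in>L. T \<subseteq> \<rho> \<longrightarrow> \<rho> \<subseteq> \<sigma>) \<Longrightarrow> Vf L T \<subseteq> \<sigma>"
  unfolding Vf_def by auto

lemma upper: "d_collapsible 4 (VR (cube n) hamming 2)"
proof -
  define K where "K = VR (cube n) hamming 2"
  have fK: "finite K" unfolding K_def by (rule K_finite)
  have mf: "\<forall>\<rho>\<in>K. finite \<rho>" unfolding K_def VR_def by auto
  have dK: "downclosed K" unfolding K_def by (rule K_dc)
  have cubeK: "\<And>\<rho>. \<rho> \<in> K \<Longrightarrow> \<rho> \<subseteq> cube n" unfolding K_def VR_def by auto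
  define M where "M = {X \<in> K. card X = 4 \<and> \<not> (\<exists>c\<in>cube n. X \<subseteq> ball1 n c)}"
  have fM: "finite M" unfolding M_def using fK by simp
  have Mmax: "\<forall>\<sigma>\<in>M. \<sigma> \<in> K \<and> card \<sigma> \<le> 4 \<and> \<not> (\<exists>\<tau>\<in>K. \<sigma> \<subset> \<tau>)"
  proof
    fix \<sigma> assume s: "\<sigma> \<in> M"
    have sK: "\<sigma> \<in> K" "card \<sigma> = 4" "\<not> (\<exists>c\<in>cube n. \<sigma> \<subseteq> ball1 n c)" using s unfolding M_def by auto
    have "\<not> (\<exists>\<tau>\<in>K. \<sigma> \<subset> \<tau>)"
    proof
      assume "\<exists>\<tau>\<in>K. \<sigma> \<subset> \<tau>"
      then obtain \<tau> where tK: "\<tau> \<in> K" and st: "\<sigma> \<subset> \<tau>" by blast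
      have "card \<sigma> < card \<tau>" using psubset_card_mono[OF _ st] mf tK by blast
      then have "5 \<le> card \<tau>" using sK(2) by simp
      then obtain c where "c \<in> cube n" "\<tau> \<subseteq> ball1 n c" using ballA tK unfolding K_def by blast
      then show False using sK(3) st by blast
    qed
    then show "\<sigma> \<in> K \<and> card \<sigma> \<le> 4 \<and> \<not> (\<exists>\<tau>\<in>K. \<sigma> \<subset> \<tau>)" using sK by simp
  qed
  have step1: "(elem_collapse 4)\<^sup>*\<^sup>* K (K - M)" by (rule remove_maxset[OF fM Mmax])
  define K1 where "K1 = K - M"
  have fK1: "finite K1" unfolding K1_def using fK by simp
  have mf1: "\<forall>\<rho>\<in>K1. finite \<rho>" unfolding K1_def using mf by simp
  have dK1: "downclosed K1" unfolding downclosed_def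
  proof (intro ballI allI impI)
    fix \<rho> \<tau> assume r: "\<rho> \<in> K1" and t: "\<tau> \<subseteq> \<rho>"
    have tK: "\<tau> \<in> K" using dK r t unfolding downclosed_def K1_def by auto
    show "\<tau> \<in> K1"
    proof (rule ccontr)
      assume "\<tau> \<notin> K1"
      then have tM: "\<tau> \<in> M" using tK unfolding K1_def by simp
      have "\<rho> \<noteq> \<tau>" using r tM unfolding K1_def by auto
      then have "\<tau> \<subset> \<rho>" using t by auto
      moreover have "\<rho> \<in> K" using r unfolding K1_def by simp
      ultimately show False using Mmax tM by blast
    qed
  qed
  have ballK1: "\<And>c. c \<in> cube n \<Longrightarrow> ball1 n c \<in> K1"
  proof -
    fix c assume c: "c \<in> cube n"
    have "ball1 n c \<in> K" unfolding K_def using ball1_VR[OF c] .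
    moreover have "ball1 n c \<notin> M" unfolding M_def using c by blast
    ultimately show "ball1 n c \<in> K1" unfolding K1_def by simp
  qed
  have bigball: "\<And>\<rho>. \<rho> \<in> K1 \<Longrightarrow> 4 \<le> card \<rho> \<Longrightarrow> \<exists>c\<in>cube n. \<rho> \<subseteq> ball1 n c"
  proof -
    fix \<rho> assume r: "\<rho> \<in> K1" "4 \<le> card \<rho>"
    show "\<exists>c\<in>cube n. \<rho> \<subseteq> ball1 n c"
    proof (cases "card \<rho> = 4")
      case True then show ?thesis using r unfolding K1_def M_def by blast
    next
      case False
      then have "5 \<le> card \<rho>" using r by simp
      then show ?thesis using ballA r unfolding K1_def K_def by blast
    qed
  qed
  have inv: "\<forall>T\<in>K1. card T = 3 \<longrightarrow> Vf K1 T \<in> K1"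
  proof (intro ballI impI)
    fix T assume T: "T \<in> K1" "card T = 3"
    have fT: "finite T" using T mf1 by blast
    have eqT: "\<And>\<rho>. \<rho> \<in> K1 \<Longrightarrow> T \<subseteq> \<rho> \<Longrightarrow> \<not> 4 \<le> card \<rho> \<Longrightarrow> \<rho> = T"
    proof -
      fix \<rho> assume r: "\<rho> \<in> K1" "T \<subseteq> \<rho>" "\<not> 4 \<le> card \<rho>"
      have fr: "finite \<rho>" using r mf1 by blast
      have "card T \<le> card \<rho>" using card_mono[OF fr r(2)] .
      then have "card \<rho> = card T" using r(3) T(2) by simp
      then show "\<rho> = T" using card_subset_eq[OF fr r(2)] by simp
    qed
    have "\<exists>\<sigma>\<in>K1. \<forall>\<rho>\<in>K1. T \<subseteq> \<rho> \<longrightarrow> \<rho> \<subseteq> \<sigma>"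
    proof (cases "\<exists>\<rho>\<in>K1. T \<subseteq> \<rho> \<and> 4 \<le> card \<rho>")
      case True
      then obtain \<rho>0 where r0: "\<rho>0 \<in> K1" "T \<subseteq> \<rho>0" "4 \<le> card \<rho>0" by blast
      obtain c where c: "c \<in> cube n" "\<rho>0 \<subseteq> ball1 n c" using bigball[OF r0(1) r0(3)] by blast
      have Tc: "T \<subseteq> ball1 n c" using r0(2) c(2) by (rule subset_trans)
      have "\<forall>\<rho>\<in>K1. T \<subseteq> \<rho> \<longrightarrow> \<rho> \<subseteq> ball1 n c"
      proof (intro ballI impI)
        fix \<rho> assume r: "\<rho> \<in> K1" "T \<subseteq> \<rho>"
        show "\<rho> \<subseteq> ball1 n c"
        proof (cases "4 \<le> card \<rho>")
          case True
          obtain c' where c': "c' \<in> cube n" "\<rho> \<subseteq> ball1 n c'" using bigball[OF r(1) True] by blast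
          have "T \<subseteq> ball1 n c'" using r(2) c'(2) by (rule subset_trans)
          then have "c = c'" using centers_eq[OF c(1) c'(1) Tc] T(2) by simp
          then show ?thesis using c'(2) by simp
        next
          case False
          then have "\<rho> = T" using eqT r by blast
          then show ?thesis using Tc by simp
        qed
      qed
      then show ?thesis using ballK1[OF c(1)] by blast
    next
      case False
      have "\<forall>\<rho>\<in>K1. T \<subseteq> \<rho> \<longrightarrow> \<rho> \<subseteq> T"
      proof (intro ballI impI)
        fix \<rho> assume r: "\<rho> \<in> K1" "T \<subseteq> \<rho>"
        then have "\<not> 4 \<le> card \<rho>" using False by blast
        then have "\<rho> = T" using eqT r by blast
        then show "\<rho> \<subseteq> T" by simp
      qed
      then show ?thesis using T(1) by blast
    qed
    then obtain \<sigma> where s: "\<sigma> \<in> K1" "\<forall>\<rho>\<in>K1. T \<subseteq> \<rho> \<longrightarrow> \<rho> \<subseteq> \<sigma>" by blast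
    have "Vf K1 T \<subseteq> \<sigma>" using Vf_sub[OF s(2)] .
    then show "Vf K1 T \<in> K1" using dK1 s(1) unfolding downclosed_def by blast
  qed
  have step2: "(elem_collapse 4)\<^sup>*\<^sup>* K1 {}"
    by (rule G_all[of 3 4 K1]) (use fK1 mf1 dK1 inv in simp_all)
  have "(elem_collapse 4)\<^sup>*\<^sup>* K {}" using step1 step2 unfolding K1_def by simp
  then show ?thesis unfolding d_collapsible_def K_def by simp
qed

definition anti :: "bool list \<Rightarrow> bool list" where
  "anti x = map (\<lambda>i. if i < 3 then \<not> x ! i else x ! i) [0..<length x]"

definition Qc :: "nat \<Rightarrow> bool list set" where
  "Qc n = {w \<in> cube n. \<forall>i. 3 \<le> i \<longrightarrow> i < n \<longrightarrow> \<not> w ! i}"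

lemma anti_len[simp]: "length (anti x) = length x"
  unfolding anti_def by simp

lemma anti_Q: "x \<in> Qc n \<Longrightarrow> anti x \<in> Qc n"
  unfolding Qc_def cube_def anti_def by auto

lemma Q_len: "x \<in> Qc n \<Longrightarrow> length x = n"
  unfolding Qc_def cube_def by auto

lemma ds_anti:
  assumes n: "3 \<le> n" and x: "x \<in> Qc n" and y: "y \<in> Qc n"
  shows "ds y (anti x) = {0,1,2} - ds y x"
proof -
  have lx: "length x = n" and ly: "length y = n" using x y unfolding Qc_def cube_def by auto
  have hx: "\<And>i. 3 \<le> i \<Longrightarrow> i < n \<Longrightarrow> \<not> x ! i" and hy: "\<And>i. 3 \<le> i \<Longrightarrow> i < n \<Longrightarrow> \<not> y ! i"
    using x y unfolding Qc_def by auto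
  show ?thesis
  proof (rule set_eqI)
    fix i
    show "i \<in> ds y (anti x) \<longleftrightarrow> i \<in> {0,1,2} - ds y x"
    proof (cases "i < 3")
      case True
      then have "i < n" using n by simp
      then show ?thesis using True lx ly unfolding ds_def anti_def by auto
    next
      case False
      then show ?thesis using hx hy lx ly unfolding ds_def anti_def by auto
    qed
  qed
qed

lemma ds_Q_sub:
  assumes x: "x \<in> Qc n" and y: "y \<in> Qc n"
  shows "ds y x \<subseteq> {0,1,2}"
proof
  fix i assume i: "i \<in> ds y x"
  have "i < n" "y ! i \<noteq> x ! i" using i y unfolding ds_def Qc_def cube_def by auto
  then have "\<not> 3 \<le> i" using x y unfolding Qc_def by auto
  then show "i \<in> {0,1,2}" by auto
qed

lemma card_anti:
  assumes n: "3 \<le> n" and x: "x \<in> Qc n" and y: "y \<in> Qc n"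
  shows "card (ds y (anti x)) + card (ds y x) = 3"
proof -
  have "card (ds y (anti x)) = card ({0,1,2::nat} - ds y x)" using ds_anti[OF n x y] by simp
  also have "\<dots> = card {0,1,2::nat} - card (ds y x)" by (rule card_Diff_subset) (use ds_Q_sub[OF x y] in simp_all)
  also have "\<dots> = 3 - card (ds y x)" by simp
  finally have e: "card (ds y (anti x)) = 3 - card (ds y x)" .
  have "card (ds y x) \<le> card {0,1,2::nat}" by (rule card_mono) (use ds_Q_sub[OF x y] in simp_all)
  then have "card (ds y x) \<le> 3" by simp
  then show ?thesis using e by simp
qed

lemma self_anti: "3 \<le> n \<Longrightarrow> x \<in> Qc n \<Longrightarrow> card (ds x (anti x)) = 3"
proof -
  assume n: "3 \<le> n" and x: "x \<in> Qc n"
  have "ds x x = {}" unfolding ds_def by simp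
  then show ?thesis using card_anti[OF n x x] by simp
qed

definition Pc :: "nat \<Rightarrow> bool list set set" where
  "Pc n = {F. F \<subseteq> Qc n \<and> card F = 4 \<and> (\<forall>a\<in>F. \<forall>b\<in>F. card (ds a b) \<le> 2)}"

lemma Pc_K: "F \<in> Pc n \<Longrightarrow> F \<in> VR (cube n) hamming 2"
proof -
  assume F: "F \<in> Pc n"
  have "F \<subseteq> cube n" using F unfolding Pc_def Qc_def by auto
  moreover have "finite F" using F unfolding Pc_def by (auto intro: card_ge_0_finite)
  ultimately show ?thesis using F unfolding VR_mem Pc_def by auto
qed

lemma exists_max:
  assumes fL: "finite L" and F: "F \<in> L"
  shows "\<exists>m. maximal_simplex L m \<and> F \<subseteq> m"
proof -
  define A where "A = {\<rho>\<in>L. F \<subseteq> \<rho>}"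
  have fA: "finite A" unfolding A_def using fL by simp
  have FA: "F \<in> A" unfolding A_def using F by simp
  have neA: "A \<noteq> {}"
  proof
    assume e: "A = {}"
    then show False using FA by simp
  qed
  obtain m where m1: "m \<in> A" and m2: "\<forall>b\<in>A. m \<le> b \<longrightarrow> m = b"
    using finite_has_maximal[OF fA neA] by blast
  have mL: "m \<in> L" and Fm: "F \<subseteq> m" using m1 unfolding A_def by auto
  have "\<not> (\<exists>\<tau>\<in>L. m \<subset> \<tau>)"
  proof
    assume "\<exists>\<tau>\<in>L. m \<subset> \<tau>"
    then obtain \<tau> where t: "\<tau> \<in> L" "m \<subset> \<tau>" by blast
    have "\<tau> \<in> A" unfolding A_def using t Fm by auto
    then have "m = \<tau>" using m2 t(2) by auto
    then show False using t(2) by simp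
  qed
  then have "maximal_simplex L m" unfolding maximal_simplex_def using mL by simp
  then show ?thesis using Fm by blast
qed

lemma inv_step:
  assumes n: "3 \<le> n" and d: "d \<le> 3" and LK: "L \<subseteq> VR (cube n) hamming 2" and PL: "Pc n \<subseteq> L"
    and ec: "elem_collapse d L L'"
  shows "L' \<subseteq> VR (cube n) hamming 2 \<and> Pc n \<subseteq> L'"
proof -
  obtain \<gamma> \<sigma> where g: "\<gamma> \<in> L" "card \<gamma> \<le> d" "maximal_simplex L \<sigma>" "\<gamma> \<subseteq> \<sigma>"
    "\<forall>\<sigma>'. maximal_simplex L \<sigma>' \<and> \<gamma> \<subseteq> \<sigma>' \<longrightarrow> \<sigma>' = \<sigma>" and L': "L' = L - {\<tau>. \<gamma> \<subseteq> \<tau> \<and> \<tau> \<subseteq> \<sigma>}"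
    using ec unfolding elem_collapse_def by blast
  have fL: "finite L" using LK K_finite finite_subset by blast
  have sK: "\<sigma> \<in> VR (cube n) hamming 2" using g(3) LK unfolding maximal_simplex_def by blast
  have "Pc n \<subseteq> L'"
  proof
    fix F assume FP: "F \<in> Pc n"
    have FL: "F \<in> L" using FP PL by blast
    show "F \<in> L'"
    proof (rule ccontr)
      assume "F \<notin> L'"
      then have gF: "\<gamma> \<subseteq> F" and Fs: "F \<subseteq> \<sigma>" using FL unfolding L' by auto
      have FQ: "F \<subseteq> Qc n" and cF: "card F = 4" and dF: "\<forall>a\<in>F. \<forall>b\<in>F. card (ds a b) \<le> 2"
        using FP unfolding Pc_def by auto
      have fF: "finite F" using cF by (auto intro: card_ge_0_finite)
      have "\<not> F \<subseteq> \<gamma>"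
      proof
        assume "F \<subseteq> \<gamma>"
        then have "card F \<le> card \<gamma>" using card_mono[OF finite_subset[OF gF fF]] by blast
        then show False using cF g(2) d by simp
      qed
      then obtain x where x: "x \<in> F" "x \<notin> \<gamma>" by blast
      have xQ: "x \<in> Qc n" using x FQ by blast
      have aQ: "anti x \<in> Qc n" by (rule anti_Q[OF xQ])
      have c3: "card (ds x (anti x)) = 3" by (rule self_anti[OF n xQ])
      have aF: "anti x \<notin> F"
      proof
        assume "anti x \<in> F"
        then have "card (ds x (anti x)) \<le> 2" using dF x(1) by blast
        then show False using c3 by simp
      qed
      define F' where "F' = insert (anti x) (F - {x})"
      have F'Q: "F' \<subseteq> Qc n" unfolding F'_def using FQ aQ by blast
      have cF': "card F' = 4"
      proof -
        have "card (F - {x}) = 3" using cF x(1) fF by simp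
        moreover have "anti x \<notin> F - {x}" using aF by simp
        ultimately show ?thesis unfolding F'_def using fF by simp
      qed
      have dF': "\<forall>a\<in>F'. \<forall>b\<in>F'. card (ds a b) \<le> 2"
      proof (intro ballI)
        fix a b assume ab: "a \<in> F'" "b \<in> F'"
        have oth: "\<And>y. y \<in> F - {x} \<Longrightarrow> card (ds y (anti x)) \<le> 2 \<and> card (ds (anti x) y) \<le> 2"
        proof -
          fix y assume y: "y \<in> F - {x}"
          have yQ: "y \<in> Qc n" using y FQ by blast
          have "ds y x \<noteq> {}" using ds_empty Q_len[OF yQ] Q_len[OF xQ] y by auto
          then have "card (ds y x) \<ge> 1" by (simp add: Suc_le_eq card_gt_0_iff)
          then have h: "card (ds y (anti x)) \<le> 2" using card_anti[OF n xQ yQ] by simp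
          have "ds (anti x) y = ds y (anti x)" using ds_sym Q_len[OF yQ] Q_len[OF aQ] by simp
          then show "card (ds y (anti x)) \<le> 2 \<and> card (ds (anti x) y) \<le> 2" using h by simp
        qed
        show "card (ds a b) \<le> 2"
        proof (cases "a = anti x")
          case True
          show ?thesis
          proof (cases "b = anti x")
            case True
            have "ds a b = {}" unfolding ds_def using \<open>a = anti x\<close> True by simp
            then show ?thesis by simp
          next
            case False
            then have "b \<in> F - {x}" using ab(2) unfolding F'_def by blast
            then show ?thesis using oth \<open>a = anti x\<close> by blast
          qed
        next
          case aa: False
          then have a': "a \<in> F - {x}" using ab(1) unfolding F'_def by blast
          show ?thesis
          proof (cases "b = anti x")
            case True
            then show ?thesis using oth a' by blast
          next
            case False
            then have "b \<in> F - {x}" using ab(2) unfolding F'_def by blast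
            then show ?thesis using dF a' by blast
          qed
        qed
      qed
      have F'P: "F' \<in> Pc n" unfolding Pc_def using F'Q cF' dF' by blast
      then have F'L: "F' \<in> L" using PL by blast
      have gF': "\<gamma> \<subseteq> F'" unfolding F'_def using gF x(2) by blast
      obtain m where m: "maximal_simplex L m" "F' \<subseteq> m" using exists_max[OF fL F'L] by blast
      have "m = \<sigma>" using g(5) m gF' by blast
      then have "anti x \<in> \<sigma>" "x \<in> \<sigma>" using m(2) x(1) Fs unfolding F'_def by blast+
      then have "card (ds x (anti x)) \<le> 2" using sK unfolding VR_mem by blast
      then show False using c3 by simp
    qed
  qed
  moreover have "L' \<subseteq> VR (cube n) hamming 2" using LK unfolding L' by blast
  ultimately show ?thesis by simp
qed

lemma lower_inv:
  assumes n: "3 \<le> n" and d: "d \<le> 3"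
    and r: "(elem_collapse d)\<^sup>*\<^sup>* (VR (cube n) hamming 2) L"
  shows "L \<subseteq> VR (cube n) hamming 2 \<and> Pc n \<subseteq> L"
  using r
proof (induct rule: rtranclp_induct)
  case base
  then show ?case using Pc_K by blast
next
  case (step y z)
  then show ?case using inv_step[OF n d] by blast
qed

lemma Pc_nonempty:
  assumes n: "3 \<le> n"
  shows "Pc n \<noteq> {}"
proof -
  define z where "z = replicate n False"
  define e where "e = (\<lambda>k. z[k := True])"
  have lz: "length z = n" unfolding z_def by simp
  have le: "\<And>k. length (e k) = n" unfolding e_def z_def by simp
  have zQ: "z \<in> Qc n" unfolding z_def Qc_def cube_def by simp
  have eQ: "\<And>k. k < 3 \<Longrightarrow> e k \<in> Qc n" unfolding e_def z_def Qc_def cube_def by (auto simp: nth_list_update)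
  have dz: "\<And>k. k < n \<Longrightarrow> ds z (e k) \<subseteq> {k}" unfolding ds_def e_def z_def by (auto simp: nth_list_update)
  have ek: "\<And>k. k < n \<Longrightarrow> e k ! k" unfolding e_def z_def by simp
  have zk: "\<And>k. k < n \<Longrightarrow> \<not> z ! k" unfolding z_def by simp
  have ejk: "\<And>j k. j < n \<Longrightarrow> k < n \<Longrightarrow> j \<noteq> k \<Longrightarrow> \<not> e j ! k" unfolding e_def z_def by (simp add: nth_list_update)
  define F0 where "F0 = {z, e 0, e 1, e 2}"
  have n0: "0 < n" "1 < n" "2 < n" using n by auto
  have d1a: "z \<noteq> e 0" using ek[of 0] zk[of 0] n0 by auto
  have d1b: "z \<noteq> e 1" using ek[of 1] zk[of 1] n0 by auto
  have d1c: "z \<noteq> e 2" using ek[of 2] zk[of 2] n0 by auto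
  have d2a: "e 0 \<noteq> e 1" using ek[of 0] ejk[of 1 0] n0 by auto
  have d2b: "e 0 \<noteq> e 2" using ek[of 0] ejk[of 2 0] n0 by auto
  have d2c: "e 1 \<noteq> e 2" using ek[of 1] ejk[of 2 1] n0 by auto
  note d1 = d1a d1b d1c and d2 = d2a d2b d2c
  have cF0: "card F0 = 4" unfolding F0_def using d1 d2 by simp
  have F0Q: "F0 \<subseteq> Qc n" unfolding F0_def using zQ eQ by simp
  have all1: "\<forall>a\<in>F0. card (ds z a) \<le> 1 \<and> length a = n"
  proof
    fix a assume "a \<in> F0"
    then have "a = z \<or> a = e 0 \<or> a = e 1 \<or> a = e 2" unfolding F0_def by simp
    then show "card (ds z a) \<le> 1 \<and> length a = n"
    proof (elim disjE)
      assume "a = z" then show ?thesis unfolding ds_def using lz by simp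
    next
      assume a: "a = e 0"
      have "card (ds z a) \<le> card {0::nat}" unfolding a by (rule card_mono) (use dz n0 in simp_all)
      then show ?thesis using le a by simp
    next
      assume a: "a = e 1"
      have "card (ds z a) \<le> card {1::nat}" unfolding a by (rule card_mono) (use dz n0 in simp_all)
      then show ?thesis using le a by simp
    next
      assume a: "a = e 2"
      have "card (ds z a) \<le> card {2::nat}" unfolding a by (rule card_mono) (use dz n0 in simp_all)
      then show ?thesis using le a by simp
    qed
  qed
  have "\<forall>a\<in>F0. \<forall>b\<in>F0. card (ds a b) \<le> 2"
  proof (intro ballI)
    fix a b assume ab: "a \<in> F0" "b \<in> F0"
    have ha: "card (ds z a) \<le> 1" "length a = n" and hb: "card (ds z b) \<le> 1" "length b = n"
      using all1 ab by blast+
    have "ds a z = ds z a" using ds_sym ha(2) lz by simp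
    then show "card (ds a b) \<le> 2" using ds_triangle[of a z b] ha hb lz by simp
  qed
  then have "F0 \<in> Pc n" unfolding Pc_def using cF0 F0Q by blast
  then show ?thesis by blast
qed

lemma lower:
  assumes n: "3 \<le> n" and d: "d \<le> 3"
  shows "\<not> d_collapsible d (VR (cube n) hamming 2)"
proof
  assume "d_collapsible d (VR (cube n) hamming 2)"
  then have "Pc n \<subseteq> {}" using lower_inv[OF n d] unfolding d_collapsible_def by blast
  then show False using Pc_nonempty[OF n] by blast
qed

theorem theorem1p5:
  fixes n :: nat
  assumes "n \<ge> 3"
  shows "collapsibility_number (VR (cube n) hamming 2) = 4"
  unfolding collapsibility_number_def
proof (rule Least_equality)
  show "d_collapsible 4 (VR (cube n) hamming 2)" by (rule upper)
next
  fix y assume y: "d_collapsible y (VR (cube n) hamming 2)"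
  show "4 \<le> y"
  proof (rule ccontr)
    assume "\<not> 4 \<le> y"
    then have "y \<le> 3" by simp
    then show False using lower[OF assms] y by blast
  qed
qed

end
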